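(* The three families of test equations for nilpotent algebra presentations are irredundant: for each $t\in\{1,2,3\}$ there exists a nilpotent presentation over $\mathbb Z$ for which some test equation of type (T$t$) fails while all test equations of the other two types hold, where, with $w$ the weight function and $d=\max_iw(a_i)$, the types are (T1) $c(a_k\,c(a_ja_i))=c(c(a_ka_j)\,a_i)$ for $w(a_k)+w(a_j)+w(a_i)\le d$; (T2) $c(r_j\,c(a_ja_i))=c(c(r_ja_j)\,a_i)$ for $r_j<\infty$, $w(a_j)+w(a_i)\le d$; (T3) $c(r_i\,c(a_ja_i))=c(a_j\,c(r_ia_i))$ for $r_i<\infty$, $w(a_j)+w(a_i)\le d$. In particular, no proper subset of these families suffices to detect inconsistency in general.
   Context: $R$ is a field or $\mathbb Z$; algebras are associative, not necessarily unital. A nilpotent presentation over $R$ on generators $a_1,\ldots,a_n$ consists of $r_1,\ldots,r_n\in\mathbb N\cup\{\infty\}$ (all $\infty$ when $R$ is a field) and $e_{i,k},b_{i,j,k}\in R$ with $0\le e_{i,k},b_{i,j,k}<r_k$ when $r_k<\infty$, with defining relations $r_ia_i=\sum_{k>i}e_{i,k}a_k$ (for $r_i<\infty$) and $a_ja_i=\sum_{k>\max\{i,j\}}b_{i,j,k}a_k$ for all $1\le i,j\le n$. $F$ is the free associative $R$-algebra on $a_1,\ldots,a_n$ and $I$ the ideal generated by the differences of the two sides of the relations; the presented algebra is $F/I$. A reduced form is $x_1a_1+\cdots+x_na_n$ with $x_i\in R$, $0\le x_i<r_i$ when $r_i<\infty$. The collection function $c\colon F\to F$ maps each element to a reduced form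 congruent to it modulo $I$, computed by the collection algorithm (using linearity, rewriting products $a_ja_i$ by the right-hand sides of the product relations, and reducing coefficients via the relations $r_ia_i=\ldots$). The presentation is consistent if every element of $F/I$ has exactly one reduced form. The weight function $w$ is the pointwise minimal function $\{a_1,\ldots,a_n\}\to\mathbb N$ with $w(a_k)\ge w(a_i)$ when $e_{i,k}\ne0$ and $w(a_k)\ge w(a_i)+w(a_j)$ when $b_{i,j,k}\ne0$. *)

theory Defs
  imports Main
begin

text \<open>Generators a_1,...,a_n are
  indexed by 0,...,n-1.  ord P i = None means r_i = infinity, ord P i = Some r means r_i = r.
  ecoef P i k is e_{i,k}; bcoef P i j k is b_{i,j,k}, i.e. a_j a_i = sum_k b_{i,j,k} a_k.
  Elements of F that are linear combinations of generators are represented by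
  coefficient functions nat => int (supported on indices below n).\<close>

record npres =
  gens :: nat
  ord :: "nat \<Rightarrow> nat option"
  ecoef :: "nat \<Rightarrow> nat \<Rightarrow> int"
  bcoef :: "nat \<Rightarrow> nat \<Rightarrow> nat \<Rightarrow> int"

definition nil_pres :: "npres \<Rightarrow> bool" where
  "nil_pres P \<longleftrightarrow>
     (\<forall>i<gens P. \<forall>r. ord P i = Some r \<longrightarrow> 0 < r) \<and>
     (\<forall>i k. ecoef P i k \<noteq> 0 \<longrightarrow> i < k \<and> k < gens P \<and> ord P i \<noteq> None) \<and>
     (\<forall>i j k. bcoef P i j k \<noteq> 0 \<longrightarrow> i < k \<and> j < k \<and> k < gens P) \<and>
     (\<forall>k<gens P. \<forall>r. ord P k = Some r \<longrightarrow>
        (\<forall>i. 0 \<le> ecoef P i k \<and> ecoef P i k < int r) \<and>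
        (\<forall>i j. 0 \<le> bcoef P i j k \<and> bcoef P i j k < int r))"

definition gen :: "nat \<Rightarrow> nat \<Rightarrow> int" where
  "gen i = (\<lambda>k. if k = i then 1 else 0)"

definition smul :: "int \<Rightarrow> (nat \<Rightarrow> int) \<Rightarrow> nat \<Rightarrow> int" where
  "smul z u = (\<lambda>k. z * u k)"

definition pmult :: "npres \<Rightarrow> (nat \<Rightarrow> int) \<Rightarrow> (nat \<Rightarrow> int) \<Rightarrow> nat \<Rightarrow> int" where
  "pmult P u v = (\<lambda>k. \<Sum>l<gens P. \<Sum>m<gens P. u l * v m * bcoef P m l k)"

text \<open>Coefficient reduction at index i via r_i a_i = sum_{k>i} e_{i,k} a_k.\<close>

definition red_step :: "npres \<Rightarrow> (nat \<Rightarrow> int) \<Rightarrow> nat \<Rightarrow> nat \<Rightarrow> int" where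
  "red_step P x i = (case ord P i of
      None \<Rightarrow> x
    | Some r \<Rightarrow> (\<lambda>k. if k = i then x i mod int r
                     else if i < k then x k + (x i div int r) * ecoef P i k
                     else x k))"

definition collect :: "npres \<Rightarrow> (nat \<Rightarrow> int) \<Rightarrow> nat \<Rightarrow> int" where
  "collect P x = foldl (red_step P) x [0..<gens P]"

definition is_weight :: "npres \<Rightarrow> (nat \<Rightarrow> nat) \<Rightarrow> bool" where
  "is_weight P w \<longleftrightarrow>
     (\<forall>k<gens P. 1 \<le> w k) \<and> (\<forall>k. gens P \<le> k \<longrightarrow> w k = 0) \<and>
     (\<forall>i<gens P. \<forall>k<gens P. ecoef P i k \<noteq> 0 \<longrightarrow> w i \<le> w k) \<and>
     (\<forall>i<gens P. \<forall>j<gens P. \<forall>k<gens P. bcoef P i j k \<noteq> 0 \<longrightarrow> w i + w j \<le> w k)"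

definition weight :: "npres \<Rightarrow> nat \<Rightarrow> nat" where
  "weight P = (THE w. is_weight P w \<and> (\<forall>w'. is_weight P w' \<longrightarrow> (\<forall>k<gens P. w k \<le> w' k)))"

definition maxweight :: "npres \<Rightarrow> nat" where
  "maxweight P = Max (weight P ` {..<gens P})"

definition eq_on :: "npres \<Rightarrow> (nat \<Rightarrow> int) \<Rightarrow> (nat \<Rightarrow> int) \<Rightarrow> bool" where
  "eq_on P x y \<longleftrightarrow> (\<forall>k<gens P. x k = y k)"

definition tests_T1 :: "npres \<Rightarrow> bool" where
  "tests_T1 P \<longleftrightarrow> (\<forall>i<gens P. \<forall>j<gens P. \<forall>k<gens P.
     weight P k + weight P j + weight P i \<le> maxweight P \<longrightarrow>
     eq_on P (collect P (pmult P (gen k) (collect P (pmult P (gen j) (gen i)))))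
             (collect P (pmult P (collect P (pmult P (gen k) (gen j))) (gen i))))"

definition tests_T2 :: "npres \<Rightarrow> bool" where
  "tests_T2 P \<longleftrightarrow> (\<forall>i<gens P. \<forall>j<gens P. \<forall>r. ord P j = Some r \<longrightarrow>
     weight P j + weight P i \<le> maxweight P \<longrightarrow>
     eq_on P (collect P (smul (int r) (collect P (pmult P (gen j) (gen i)))))
             (collect P (pmult P (collect P (smul (int r) (gen j))) (gen i))))"

definition tests_T3 :: "npres \<Rightarrow> bool" where
  "tests_T3 P \<longleftrightarrow> (\<forall>i<gens P. \<forall>j<gens P. \<forall>r. ord P i = Some r \<longrightarrow>
     weight P j + weight P i \<le> maxweight P \<longrightarrow>
     eq_on P (collect P (smul (int r) (collect P (pmult P (gen j) (gen i)))))
             (collect P (pmult P (gen j) (collect P (smul (int r) (gen i))))))"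

definition tests :: "nat \<Rightarrow> npres \<Rightarrow> bool" where
  "tests t P = (if t = 1 then tests_T1 P else if t = 2 then tests_T2 P else tests_T3 P)"

end

theory Submission
  imports Defs
begin

lemma weight_eqI:
  assumes "is_weight P w" "\<And>w'. is_weight P w' \<Longrightarrow> \<forall>k<gens P. w k \<le> w' k"
  shows "weight P = w"
  unfolding weight_def
proof (rule the_equality)
  show "is_weight P w \<and> (\<forall>w'. is_weight P w' \<longrightarrow> (\<forall>k<gens P. w k \<le> w' k))"
    using assms by blast
next
  fix v assume v: "is_weight P v \<and> (\<forall>w'. is_weight P w' \<longrightarrow> (\<forall>k<gens P. v k \<le> w' k))"
  show "v = w"
  proof
    fix k
    show "v k = w k"
    proof (cases "k < gens P")
      case True
      then show ?thesis using v assms by (meson le_antisym)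
    next
      case False
      then show ?thesis using v assms(1) unfolding is_weight_def by simp
    qed
  qed
qed

definition P1 :: npres where
  "P1 = \<lparr>gens = 3, ord = (\<lambda>_. None), ecoef = (\<lambda>_ _. 0),
     bcoef = (\<lambda>i j k. if (i = 0 \<and> j = 0 \<and> k = 1) \<or> (i = 1 \<and> j = 0 \<and> k = 2) then 1 else 0)\<rparr>"

definition P2 :: npres where
  "P2 = \<lparr>gens = 3, ord = (\<lambda>i. if i = 0 \<or> i = 2 then Some 2 else None),
     ecoef = (\<lambda>i k. if i = 0 \<and> k = 1 then 1 else 0),
     bcoef = (\<lambda>i j k. if i = 0 \<and> j = 1 \<and> k = 2 then 1 else 0)\<rparr>"

definition P3 :: npres where
  "P3 = \<lparr>gens = 3, ord = (\<lambda>i. if i = 0 \<or> i = 2 then Some 2 else None),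
     ecoef = (\<lambda>i k. if i = 0 \<and> k = 1 then 1 else 0),
     bcoef = (\<lambda>i j k. if i = 1 \<and> j = 0 \<and> k = 2 then 1 else 0)\<rparr>"

lemma less3: "(k::nat) < 3 \<longleftrightarrow> k = 0 \<or> k = 1 \<or> k = 2" by auto


lemma w1: "weight P1 = (\<lambda>k. if k = 0 then 1 else if k = 1 then 2 else if k = 2 then 3 else 0)"
proof (rule weight_eqI)
  show "is_weight P1 (\<lambda>k. if k = 0 then 1 else if k = 1 then 2 else if k = 2 then 3 else 0)"
    unfolding is_weight_def P1_def by (auto simp: less3)
next
  fix w' assume a: "is_weight P1 w'"
  have g: "gens P1 = 3" by (simp add: P1_def)
  have h0: "1 \<le> w' 0" using a g unfolding is_weight_def by simp
  have h1: "w' 0 + w' 0 \<le> w' 1" using a g unfolding is_weight_def by (simp add: P1_def)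
  have h2: "w' 1 + w' 0 \<le> w' 2" using a g unfolding is_weight_def by (simp add: P1_def)
  show "\<forall>k<gens P1. (if k = 0 then 1 else if k = 1 then 2 else if k = 2 then 3 else 0) \<le> w' k"
    using h0 h1 h2 by (auto simp: g less3)
qed


lemma w2: "weight P2 = (\<lambda>k. if k = 0 then 1 else if k = 1 then 1 else if k = 2 then 2 else 0)"
proof (rule weight_eqI)
  show "is_weight P2 (\<lambda>k. if k = 0 then 1 else if k = 1 then 1 else if k = 2 then 2 else 0)"
    unfolding is_weight_def P2_def by (auto simp: less3)
next
  fix w' assume a: "is_weight P2 w'"
  have g: "gens P2 = 3" by (simp add: P2_def)
  have h0: "1 \<le> w' 0" using a g unfolding is_weight_def by simp
  have h1: "1 \<le> w' 1" using a g unfolding is_weight_def by simp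
  have h2: "w' 0 + w' 1 \<le> w' 2" using a g unfolding is_weight_def by (simp add: P2_def)
  show "\<forall>k<gens P2. (if k = 0 then 1 else if k = 1 then 1 else if k = 2 then 2 else 0) \<le> w' k"
    using h0 h1 h2 by (auto simp: g less3)
qed

lemma w3: "weight P3 = (\<lambda>k. if k = 0 then 1 else if k = 1 then 1 else if k = 2 then 2 else 0)"
proof (rule weight_eqI)
  show "is_weight P3 (\<lambda>k. if k = 0 then 1 else if k = 1 then 1 else if k = 2 then 2 else 0)"
    unfolding is_weight_def P3_def by (auto simp: less3)
next
  fix w' assume a: "is_weight P3 w'"
  have g: "gens P3 = 3" by (simp add: P3_def)
  have h0: "1 \<le> w' 0" using a g unfolding is_weight_def by simp
  have h1: "1 \<le> w' 1" using a g unfolding is_weight_def by simp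
  have h2: "w' 1 + w' 0 \<le> w' 2" using a g unfolding is_weight_def by (simp add: P3_def)
  show "\<forall>k<gens P3. (if k = 0 then 1 else if k = 1 then 1 else if k = 2 then 2 else 0) \<le> w' k"
    using h0 h1 h2 by (auto simp: g less3)
qed

lemma mw1: "maxweight P1 = 3"
  unfolding maxweight_def w1 by (simp add: P1_def lessThan_Suc numeral_3_eq_3)
lemma mw2: "maxweight P2 = 2"
  unfolding maxweight_def w2 by (simp add: P2_def lessThan_Suc numeral_3_eq_3)
lemma mw3: "maxweight P3 = 2"
  unfolding maxweight_def w3 by (simp add: P3_def lessThan_Suc numeral_3_eq_3)

lemma np1: "nil_pres P1" unfolding nil_pres_def P1_def by auto
lemma np2: "nil_pres P2" unfolding nil_pres_def P2_def by auto
lemma np3: "nil_pres P3" unfolding nil_pres_def P3_def by auto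


lemma sum3: "(\<Sum>l<(3::nat). f l) = f 0 + f 1 + (f 2 :: int)"
  by (simp add: numeral_3_eq_3 lessThan_Suc numeral_2_eq_2)
lemma upt3: "[0..<3] = [0::nat,1,2]" by (simp add: numeral_3_eq_3 upt_rec)

lemma c1: "collect P1 x = x"
  unfolding collect_def by (simp add: P1_def upt3 red_step_def)
lemma p1: "pmult P1 u v = (\<lambda>k. if k = 1 then u 0 * v 0 else if k = 2 then u 0 * v 1 else 0)"
  unfolding pmult_def by (auto simp: P1_def sum3 fun_eq_iff)

lemma c2: "collect P2 x = (\<lambda>k. if k = 0 then x 0 mod 2 else if k = 1 then x 1 + x 0 div 2
   else if k = 2 then x 2 mod 2 else x k)"
  unfolding collect_def by (auto simp: P2_def upt3 red_step_def fun_eq_iff)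
lemma p2: "pmult P2 u v = (\<lambda>k. if k = 2 then u 1 * v 0 else 0)"
  unfolding pmult_def by (auto simp: P2_def sum3 fun_eq_iff)

lemma c3: "collect P3 x = (\<lambda>k. if k = 0 then x 0 mod 2 else if k = 1 then x 1 + x 0 div 2
   else if k = 2 then x 2 mod 2 else x k)"
  unfolding collect_def by (auto simp: P3_def upt3 red_step_def fun_eq_iff)
lemma p3: "pmult P3 u v = (\<lambda>k. if k = 2 then u 0 * v 1 else 0)"
  unfolding pmult_def by (auto simp: P3_def sum3 fun_eq_iff)


lemma g1: "gens P1 = 3" by (simp add: P1_def)
lemma g2: "gens P2 = 3" by (simp add: P2_def)
lemma g3: "gens P3 = 3" by (simp add: P3_def)

lemma o2: "ord P2 i = (if i = 0 \<or> i = 2 then Some 2 else None)" by (simp add: P2_def)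
lemma o3: "ord P3 i = (if i = 0 \<or> i = 2 then Some 2 else None)" by (simp add: P3_def)

lemma t11: "\<not> tests_T1 P1"
proof
  assume "tests_T1 P1"
  then have "eq_on P1 (collect P1 (pmult P1 (gen 0) (collect P1 (pmult P1 (gen 0) (gen 0)))))
             (collect P1 (pmult P1 (collect P1 (pmult P1 (gen 0) (gen 0))) (gen 0)))"
    unfolding tests_T1_def mw1 w1 g1 by simp
  then have "(2::nat) < 3 \<longrightarrow> (1::int) = 0"
    unfolding eq_on_def g1 c1 p1 by (auto simp: gen_def dest: spec[of _ 2])
  then show False by simp
qed
lemma t12: "tests_T2 P1" unfolding tests_T2_def by (simp add: P1_def)
lemma t13: "tests_T3 P1" unfolding tests_T3_def by (simp add: P1_def)

lemma t21: "tests_T1 P2" unfolding tests_T1_def mw2 w2 g2 by (auto simp: less3)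
lemma t22: "\<not> tests_T2 P2"
proof
  assume "tests_T2 P2"
  then have "eq_on P2 (collect P2 (smul (int 2) (collect P2 (pmult P2 (gen 0) (gen 0)))))
             (collect P2 (pmult P2 (collect P2 (smul (int 2) (gen 0))) (gen 0)))"
    unfolding tests_T2_def mw2 w2 g2 apply - apply (drule spec[of _ 0], drule mp, simp)+ by (drule spec[of _ 2], simp add: o2)
  then have "(2::nat) < 3 \<longrightarrow> (1::int) = 0"
    unfolding eq_on_def g2 c2 p2 by (auto simp: gen_def smul_def dest: spec[of _ 2])
  then show False by simp
qed
lemma t23: "tests_T3 P2"
  unfolding tests_T3_def mw2 w2 g2 c2 p2
  by (auto simp: eq_on_def gen_def smul_def o2 less3 split: if_splits)

lemma t31: "tests_T1 P3" unfolding tests_T1_def mw3 w3 g3 by (auto simp: less3)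
lemma t32: "tests_T2 P3"
  unfolding tests_T2_def mw3 w3 g3 c3 p3
  by (auto simp: eq_on_def gen_def smul_def o3 less3 split: if_splits)
lemma t33: "\<not> tests_T3 P3"
proof
  assume "tests_T3 P3"
  then have "eq_on P3 (collect P3 (smul (int 2) (collect P3 (pmult P3 (gen 0) (gen 0)))))
             (collect P3 (pmult P3 (gen 0) (collect P3 (smul (int 2) (gen 0)))))"
    unfolding tests_T3_def mw3 w3 g3 apply - apply (drule spec[of _ 0], drule mp, simp)+ by (drule spec[of _ 2], simp add: o3)
  then have "(2::nat) < 3 \<longrightarrow> (1::int) = 0"
    unfolding eq_on_def g3 c3 p3 by (auto simp: gen_def smul_def dest: spec[of _ 2])
  then show False by simp
qed

theorem proposition27:
  shows "\<forall>t\<in>{1,2,3::nat}. \<exists>P. nil_pres P \<and> \<not> tests t P \<and>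
           (\<forall>s\<in>{1,2,3::nat}. s \<noteq> t \<longrightarrow> tests s P)"
proof -
  have 1: "\<exists>P. nil_pres P \<and> \<not> tests 1 P \<and> (\<forall>s\<in>{1,2,3::nat}. s \<noteq> 1 \<longrightarrow> tests s P)"
    by (rule exI[of _ P1]) (auto simp: tests_def np1 t11 t12 t13)
  have 2: "\<exists>P. nil_pres P \<and> \<not> tests 2 P \<and> (\<forall>s\<in>{1,2,3::nat}. s \<noteq> 2 \<longrightarrow> tests s P)"
    by (rule exI[of _ P2]) (auto simp: tests_def np2 t21 t22 t23)
  have 3: "\<exists>P. nil_pres P \<and> \<not> tests 3 P \<and> (\<forall>s\<in>{1,2,3::nat}. s \<noteq> 3 \<longrightarrow> tests s P)"
    by (rule exI[of _ P3]) (auto simp: tests_def np3 t31 t32 t33)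
  show ?thesis using 1 2 3 by auto
qed

end
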